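(* Let $f^*$ be a symmetric interpolation of a connectivity function $f$ on a finite set $V$. Let $S,T$ be disjoint subsets of $V$. If there exist distinct elements $a_1,\dots,a_\ell,b_1,\dots,b_\ell$ in $V-(S\cup T)$ such that (i) $f^*(S\cup\{a_i\},T\cup\{b_i\})>f^*(S,T)$ for all $i\in\{1,\dots,\ell\}$, (ii) $f^*(S\cup\{a_i\},T\cup\{b_j\})=f^*(S,T)$ for all $1\le i<j\le\ell$, (iii) $f^*(S\cup\{b_i\},T\cup\{a_j\})=f^*(S,T)$ for all $i,j\in\{1,\dots,\ell\}$, and (iv) $f^*(S\cup\{a_i\},T)=f^*(S,T\cup\{b_i\})=f^*(S,T)$ for all $i\in\{1,\dots,\ell\}$, then $\ell\le 2f^*(S,T)$.
   Context: A connectivity function on a finite set $V$ is a function $f:2^V\to\mathbb Z$ such that $f(X)=f(V-X)$ for all $X\subseteq V$, $f(X)+f(Y)\ge f(X\cup Y)+f(X\cap Y)$ for all $X,Y\subseteq V$, and $f(\emptyset)=0$. An interpolation of $f$ is a function $f^*$ defined on pairs $(X,Y)$ of disjoint subsets of $V$, with integer values, such that (i) $f^*(X,V-X)=f(X)$ for all $X\subseteq V$; (ii) if $C\cap D=\emptyset$, $A\subseteq C$, $B\subseteq D$ then $f^*(A,B)\le f^*(C,D)$; (iii) $f^*(A,B)+f^*(C,D)\ge f^*(A\cap C,B\cup D)+f^*(A\cup C,B\cap D)$ for all such pairs; (iv) $f^*(\emptyset,\emptyset)=f(\emptyset)$. The interpolation is symmetric if $f^*(X,Y)=f^*(Y,X)$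 for all disjoint $X,Y\subseteq V$. *)

theory Defs
  imports Main
begin

definition connectivity_function :: "'a set \<Rightarrow> ('a set \<Rightarrow> int) \<Rightarrow> bool" where
  "connectivity_function V f \<longleftrightarrow>
     (\<forall>X. X \<subseteq> V \<longrightarrow> f X = f (V - X)) \<and>
     (\<forall>X Y. X \<subseteq> V \<longrightarrow> Y \<subseteq> V \<longrightarrow> f X + f Y \<ge> f (X \<union> Y) + f (X \<inter> Y)) \<and>
     f {} = 0"

definition disj_pair :: "'a set \<Rightarrow> 'a set \<Rightarrow> 'a set \<Rightarrow> bool" where
  "disj_pair V X Y \<longleftrightarrow> X \<subseteq> V \<and> Y \<subseteq> V \<and> X \<inter> Y = {}"

definition interpolation ::
  "'a set \<Rightarrow> ('a set \<Rightarrow> int) \<Rightarrow> ('a set \<Rightarrow> 'a set \<Rightarrow> int) \<Rightarrow> bool" where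
  "interpolation V f fs \<longleftrightarrow>
     (\<forall>X. X \<subseteq> V \<longrightarrow> fs X (V - X) = f X) \<and>
     (\<forall>A B C D. disj_pair V C D \<longrightarrow> A \<subseteq> C \<longrightarrow> B \<subseteq> D \<longrightarrow> fs A B \<le> fs C D) \<and>
     (\<forall>A B C D. disj_pair V A B \<longrightarrow> disj_pair V C D \<longrightarrow>
        fs A B + fs C D \<ge> fs (A \<inter> C) (B \<union> D) + fs (A \<union> C) (B \<inter> D)) \<and>
     fs {} {} = f {}"

definition symmetric_interpolation ::
  "'a set \<Rightarrow> ('a set \<Rightarrow> int) \<Rightarrow> ('a set \<Rightarrow> 'a set \<Rightarrow> int) \<Rightarrow> bool" where
  "symmetric_interpolation V f fs \<longleftrightarrow> interpolation V f fs \<and>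
     (\<forall>X Y. disj_pair V X Y \<longrightarrow> fs X Y = fs Y X)"

end

theory Submission
  imports Defs
begin

theorem lemma4p1:
  fixes V :: "'a set" and f :: "'a set \<Rightarrow> int" and fs :: "'a set \<Rightarrow> 'a set \<Rightarrow> int"
    and S T :: "'a set" and a b :: "nat \<Rightarrow> 'a" and l :: nat
  assumes "finite V"
    and "connectivity_function V f"
    and "symmetric_interpolation V f fs"
    and "S \<subseteq> V" and "T \<subseteq> V" and "S \<inter> T = {}"
    and "\<forall>i\<in>{1..l}. a i \<in> V - (S \<union> T) \<and> b i \<in> V - (S \<union> T)"
    and "inj_on a {1..l}" and "inj_on b {1..l}" and "a ` {1..l} \<inter> b ` {1..l} = {}"
    and "\<forall>i\<in>{1..l}. fs (S \<union> {a i}) (T \<union> {b i}) > fs S T"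
    and "\<forall>i\<in>{1..l}. \<forall>j\<in>{1..l}. i < j \<longrightarrow> fs (S \<union> {a i}) (T \<union> {b j}) = fs S T"
    and "\<forall>i\<in>{1..l}. \<forall>j\<in>{1..l}. fs (S \<union> {b i}) (T \<union> {a j}) = fs S T"
    and "\<forall>i\<in>{1..l}. fs (S \<union> {a i}) T = fs S T \<and> fs S (T \<union> {b i}) = fs S T"
  shows "int l \<le> 2 * fs S T"
proof -
  define k where "k = fs S T"
  define N where "N = {1..l}"
  have I: "interpolation V f fs" and sym: "\<forall>X Y. disj_pair V X Y \<longrightarrow> fs X Y = fs Y X"
    using assms(3) unfolding symmetric_interpolation_def by auto
  have mono: "\<And>A B C D. disj_pair V C D \<Longrightarrow> A \<subseteq> C \<Longrightarrow> B \<subseteq> D \<Longrightarrow> fs A B \<le> fs C D"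
    using I unfolding interpolation_def by blast
  have sub: "\<And>A B C D. disj_pair V A B \<Longrightarrow> disj_pair V C D \<Longrightarrow>
      fs (A \<inter> C) (B \<union> D) + fs (A \<union> C) (B \<inter> D) \<le> fs A B + fs C D"
    using I unfolding interpolation_def by blast
  have e1: "fs {} {} = f {}" using I unfolding interpolation_def by blast
  have e2: "f {} = 0" using assms(2) unfolding connectivity_function_def by blast
  have e0: "fs {} {} = 0" using e1 e2 by simp
  have dST: "disj_pair V S T" using assms(4,5,6) unfolding disj_pair_def by auto
  have low: "\<And>X Y. disj_pair V X Y \<Longrightarrow> S \<subseteq> X \<Longrightarrow> T \<subseteq> Y \<Longrightarrow> k \<le> fs X Y"
    unfolding k_def by (rule mono)
  have clos: "\<And>A B C D. disj_pair V A B \<Longrightarrow> disj_pair V C D \<Longrightarrow> S \<subseteq> A \<Longrightarrow> S \<subseteq> C \<Longrightarrow>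
     T \<subseteq> B \<Longrightarrow> T \<subseteq> D \<Longrightarrow> fs A B = k \<Longrightarrow> fs C D = k \<Longrightarrow>
     fs (A \<inter> C) (B \<union> D) = k \<and> fs (A \<union> C) (B \<inter> D) = k"
  proof -
    fix A B C D
    assume h: "disj_pair V A B" "disj_pair V C D" "S \<subseteq> A" "S \<subseteq> C" "T \<subseteq> B" "T \<subseteq> D"
      "fs A B = k" "fs C D = k"
    have d1: "disj_pair V (A \<inter> C) (B \<union> D)" "disj_pair V (A \<union> C) (B \<inter> D)"
      using h(1,2) unfolding disj_pair_def by auto
    have "k \<le> fs (A \<inter> C) (B \<union> D)" using low[OF d1(1)] h by auto
    moreover have "k \<le> fs (A \<union> C) (B \<inter> D)" using low[OF d1(2)] h by auto
    moreover note sub[OF h(1,2)]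
    ultimately show "fs (A \<inter> C) (B \<union> D) = k \<and> fs (A \<union> C) (B \<inter> D) = k" using h by linarith
  qed
  have aN: "\<And>i. i \<in> N \<Longrightarrow> a i \<in> V \<and> a i \<notin> S \<and> a i \<notin> T"
    and bN: "\<And>i. i \<in> N \<Longrightarrow> b i \<in> V \<and> b i \<notin> S \<and> b i \<notin> T"
    using assms(7) unfolding N_def by auto
  have abd: "\<And>I J. I \<subseteq> N \<Longrightarrow> J \<subseteq> N \<Longrightarrow> a ` I \<inter> b ` J = {}"
    using assms(10) unfolding N_def by blast
  have sa: "\<And>I. I \<subseteq> N \<Longrightarrow> a ` I \<subseteq> V \<and> a ` I \<inter> S = {} \<and> a ` I \<inter> T = {}"
    using aN by blast
  have sb: "\<And>I. I \<subseteq> N \<Longrightarrow> b ` I \<subseteq> V \<and> b ` I \<inter> S = {} \<and> b ` I \<inter> T = {}"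
    using bN by blast
  have dp1: "\<And>I J. I \<subseteq> N \<Longrightarrow> J \<subseteq> N \<Longrightarrow> disj_pair V (S \<union> a ` I) (T \<union> b ` J)"
  proof -
    fix I J assume h: "I \<subseteq> N" "J \<subseteq> N"
    have "a ` I \<inter> b ` J = {}" using abd h .
    then show "disj_pair V (S \<union> a ` I) (T \<union> b ` J)"
      unfolding disj_pair_def using sa[OF h(1)] sb[OF h(2)] assms(4,5,6) by auto
  qed
  have dp2: "\<And>I J. I \<subseteq> N \<Longrightarrow> J \<subseteq> N \<Longrightarrow> disj_pair V (S \<union> b ` I) (T \<union> a ` J)"
  proof -
    fix I J assume h: "I \<subseteq> N" "J \<subseteq> N"
    have "a ` J \<inter> b ` I = {}" using abd h by blast
    then show "disj_pair V (S \<union> b ` I) (T \<union> a ` J)"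
      unfolding disj_pair_def using sa[OF h(2)] sb[OF h(1)] assms(4,5,6) by auto
  qed
  have finN: "finite N" unfolding N_def by simp
  have G1: "\<And>J. J \<subseteq> N \<Longrightarrow> fs S (T \<union> b ` J) = k"
  proof -
    fix J assume "J \<subseteq> N"
    then have "finite J" using finN finite_subset by blast
    then show "J \<subseteq> N \<Longrightarrow> fs S (T \<union> b ` J) = k"
    proof (induction J rule: finite_induct)
      case empty then show ?case by (simp add: k_def)
    next
      case (insert j J)
      have c: "fs (S \<inter> S) ((T \<union> b ` {j}) \<union> (T \<union> b ` J)) = k"
        using clos[OF dp1[of "{}" "{j}", simplified] dp1[of "{}" J, simplified]]
          insert assms(14) unfolding N_def k_def by auto
      have "(T \<union> b ` {j}) \<union> (T \<union> b ` J) = T \<union> b ` insert j J" by auto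
      then show ?case using c by simp
    qed
  qed
  have G2: "\<And>i J. i \<in> N \<Longrightarrow> J \<subseteq> N \<Longrightarrow> (\<forall>j\<in>J. i < j) \<Longrightarrow> fs (S \<union> a ` {i}) (T \<union> b ` J) = k"
  proof -
    fix i J assume i: "i \<in> N" and "J \<subseteq> N"
    then have "finite J" using finN finite_subset by blast
    then show "J \<subseteq> N \<Longrightarrow> (\<forall>j\<in>J. i < j) \<Longrightarrow> fs (S \<union> a ` {i}) (T \<union> b ` J) = k"
    proof (induction J rule: finite_induct)
      case empty then show ?case using assms(14) i unfolding N_def k_def by simp
    next
      case (insert j J)
      have v1: "fs (S \<union> a ` {i}) (T \<union> b ` {j}) = k"
        using assms(12) i insert.prems unfolding N_def k_def by auto
      have v2: "fs (S \<union> a ` {i}) (T \<union> b ` J) = k" using insert by auto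
      have c: "fs ((S \<union> a ` {i}) \<inter> (S \<union> a ` {i})) ((T \<union> b ` {j}) \<union> (T \<union> b ` J)) = k"
        using clos[OF dp1[of "{i}" "{j}"] dp1[of "{i}" J] _ _ _ _ v1 v2] i insert.prems by auto
      have "(T \<union> b ` {j}) \<union> (T \<union> b ` J) = T \<union> b ` insert j J" by auto
      then show ?case using c by simp
    qed
  qed
  have G3: "\<And>I J. I \<subseteq> N \<Longrightarrow> J \<subseteq> N \<Longrightarrow> (\<forall>i\<in>I. \<forall>j\<in>J. i < j) \<Longrightarrow> fs (S \<union> a ` I) (T \<union> b ` J) = k"
  proof -
    fix I J assume "I \<subseteq> N" and J: "J \<subseteq> N"
    then have "finite I" using finN finite_subset by blast
    then show "I \<subseteq> N \<Longrightarrow> (\<forall>i\<in>I. \<forall>j\<in>J. i < j) \<Longrightarrow> fs (S \<union> a ` I) (T \<union> b ` J) = k"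
    proof (induction I rule: finite_induct)
      case empty then show ?case using G1[OF J] by simp
    next
      case (insert i I)
      have v1: "fs (S \<union> a ` {i}) (T \<union> b ` J) = k"
        using G2[OF _ J] insert.prems by auto
      have v2: "fs (S \<union> a ` I) (T \<union> b ` J) = k" using insert by auto
      have c: "fs ((S \<union> a ` {i}) \<union> (S \<union> a ` I)) ((T \<union> b ` J) \<inter> (T \<union> b ` J)) = k"
        using clos[OF dp1[of "{i}" J] dp1[of I J] _ _ _ _ v1 v2] J insert.prems by auto
      have "(S \<union> a ` {i}) \<union> (S \<union> a ` I) = S \<union> a ` insert i I" by auto
      then show ?case using c by simp
    qed
  qed
  have H1: "\<And>i J. i \<in> N \<Longrightarrow> J \<subseteq> N \<Longrightarrow> J \<noteq> {} \<Longrightarrow> fs (S \<union> b ` {i}) (T \<union> a ` J) = k"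
  proof -
    fix i J assume i: "i \<in> N" and "J \<subseteq> N" "J \<noteq> {}"
    then have "finite J" using finN finite_subset by blast
    then show "J \<noteq> {} \<Longrightarrow> J \<subseteq> N \<Longrightarrow> fs (S \<union> b ` {i}) (T \<union> a ` J) = k"
    proof (induction J rule: finite_ne_induct)
      case (singleton j) then show ?case using assms(13) i unfolding N_def k_def by simp
    next
      case (insert j J)
      have v1: "fs (S \<union> b ` {i}) (T \<union> a ` {j}) = k"
        using assms(13) i insert.prems unfolding N_def k_def by auto
      have v2: "fs (S \<union> b ` {i}) (T \<union> a ` J) = k" using insert by auto
      have c: "fs ((S \<union> b ` {i}) \<inter> (S \<union> b ` {i})) ((T \<union> a ` {j}) \<union> (T \<union> a ` J)) = k"
        using clos[OF dp2[of "{i}" "{j}"] dp2[of "{i}" J] _ _ _ _ v1 v2] i insert.prems by auto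
      have "(T \<union> a ` {j}) \<union> (T \<union> a ` J) = T \<union> a ` insert j J" by auto
      then show ?case using c by simp
    qed
  qed
  have H: "\<And>I J. I \<subseteq> N \<Longrightarrow> I \<noteq> {} \<Longrightarrow> J \<subseteq> N \<Longrightarrow> J \<noteq> {} \<Longrightarrow> fs (S \<union> b ` I) (T \<union> a ` J) = k"
  proof -
    fix I J assume "I \<subseteq> N" "I \<noteq> {}" and J: "J \<subseteq> N" "J \<noteq> {}"
    then have "finite I" using finN finite_subset by blast
    then show "I \<noteq> {} \<Longrightarrow> I \<subseteq> N \<Longrightarrow> fs (S \<union> b ` I) (T \<union> a ` J) = k"
    proof (induction I rule: finite_ne_induct)
      case (singleton i) then show ?case using H1[OF _ J] by simp
    next
      case (insert i I)
      have v1: "fs (S \<union> b ` {i}) (T \<union> a ` J) = k"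
        using H1[OF _ J] insert.prems by auto
      have v2: "fs (S \<union> b ` I) (T \<union> a ` J) = k" using insert by auto
      have c: "fs ((S \<union> b ` {i}) \<union> (S \<union> b ` I)) ((T \<union> a ` J) \<inter> (T \<union> a ` J)) = k"
        using clos[OF dp2[of "{i}" J] dp2[of I J] _ _ _ _ v1 v2] J insert.prems by auto
      have "(S \<union> b ` {i}) \<union> (S \<union> b ` I) = S \<union> b ` insert i I" by auto
      then show ?case using c by simp
    qed
  qed
  define W where "W = S \<union> T \<union> b ` N"
  have WV: "W \<subseteq> V" using sb[of N] assms(4,5) unfolding W_def by auto
  have cnt: "\<And>m. m \<le> l \<Longrightarrow> int m \<le> fs (a ` {1..m}) W"
  proof -
    fix m show "m \<le> l \<Longrightarrow> int m \<le> fs (a ` {1..m}) W"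
    proof (induction m)
      case 0
      have "disj_pair V {} W" using WV unfolding disj_pair_def by auto
      then have "fs {} {} \<le> fs {} W" by (rule mono) auto
      then show ?case using e0 by simp
    next
      case (Suc m)
      have sN: "Suc m \<in> N" using Suc.prems unfolding N_def by auto
      have N1: "{1..m} \<subseteq> N" "{1..Suc m} \<subseteq> N" "{Suc m..l} \<subseteq> N" using Suc.prems unfolding N_def by auto
      have IH: "int m \<le> fs (a ` {1..m}) W" using Suc by auto
      have dP: "disj_pair V (a ` {1..Suc m}) W"
      proof -
        have "a ` {1..Suc m} \<inter> W = {}"
          using sa[OF N1(2)] abd[OF N1(2), of N] unfolding W_def by (simp add: Int_Un_distrib)
        then show ?thesis using sa[OF N1(2)] WV unfolding disj_pair_def by simp
      qed
      have vQ: "fs (S \<union> a ` {1..m}) (T \<union> b ` {Suc m..l}) = k"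
        using G3[OF N1(1) N1(3)] by auto
      have s1: "a ` {1..Suc m} \<inter> (S \<union> a ` {1..m}) = a ` {1..m}"
      proof -
        have "inj_on a N" using assms(8) unfolding N_def .
        then have "a (Suc m) \<in> a ` {1..m} \<longleftrightarrow> Suc m \<in> {1..m}"
          using inj_on_image_mem_iff[of a N "Suc m" "{1..m}"] sN N1(1) by blast
        then have n1: "a (Suc m) \<notin> a ` {1..m}" by simp
        have n2: "a (Suc m) \<notin> S" using aN sN by auto
        have eq: "a ` {1..Suc m} = insert (a (Suc m)) (a ` {1..m})"
        proof -
          have "{1..Suc m} = insert (Suc m) {1..m}" by auto
          then show ?thesis by simp
        qed
        have "insert (a (Suc m)) (a ` {1..m}) \<inter> (S \<union> a ` {1..m}) = a ` {1..m}"
          using n1 n2 by blast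
        then show ?thesis unfolding eq .
      qed
      have s2: "W \<union> (T \<union> b ` {Suc m..l}) = W" "W \<inter> (T \<union> b ` {Suc m..l}) = T \<union> b ` {Suc m..l}"
      proof -
        have "b ` {Suc m..l} \<subseteq> b ` N" using N1(3) by (rule image_mono)
        then have "T \<union> b ` {Suc m..l} \<subseteq> W" unfolding W_def by blast
        then show "W \<union> (T \<union> b ` {Suc m..l}) = W" "W \<inter> (T \<union> b ` {Suc m..l}) = T \<union> b ` {Suc m..l}"
          by blast+
      qed
      have s3: "a ` {1..Suc m} \<union> (S \<union> a ` {1..m}) = S \<union> a ` {1..Suc m}" by auto
      have sb1: "fs (a ` {1..m}) W + fs (S \<union> a ` {1..Suc m}) (T \<union> b ` {Suc m..l})
          \<le> fs (a ` {1..Suc m}) W + k"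
        using sub[OF dP dp1[OF N1(1) N1(3)]] unfolding s1 s2 s3 vQ .
      have "fs (S \<union> {a (Suc m)}) (T \<union> {b (Suc m)}) \<le> fs (S \<union> a ` {1..Suc m}) (T \<union> b ` {Suc m..l})"
      proof (rule mono[OF dp1[OF N1(2) N1(3)]])
        show "S \<union> {a (Suc m)} \<subseteq> S \<union> a ` {1..Suc m}" by auto
        show "T \<union> {b (Suc m)} \<subseteq> T \<union> b ` {Suc m..l}" using Suc.prems by auto
      qed
      moreover have "fs (S \<union> {a (Suc m)}) (T \<union> {b (Suc m)}) > k"
        using assms(11) sN unfolding N_def k_def by auto
      ultimately show ?case using sb1 IH by linarith
    qed
  qed
  have k0: "0 \<le> k" using mono[OF dST, of "{}" "{}"] e0 unfolding k_def by simp
  show ?thesis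
  proof (cases "l = 0")
    case True then show ?thesis using k0 k_def by simp
  next
    case False
    then have Nne: "N \<noteq> {}" unfolding N_def by auto
    have vP: "fs (S \<union> a ` N) T = k" using G3[of N "{}"] by simp
    have dP: "disj_pair V (S \<union> a ` N) T" using dp1[of N "{}"] by simp
    have dQ0: "disj_pair V (S \<union> b ` N) (T \<union> a ` N)" using dp2 by simp
    then have dQ: "disj_pair V (T \<union> a ` N) (S \<union> b ` N)" unfolding disj_pair_def by auto
    have vQ: "fs (T \<union> a ` N) (S \<union> b ` N) = k"
    proof -
      have "fs (S \<union> b ` N) (T \<union> a ` N) = k" using H[of N N] Nne by simp
      moreover have "fs (S \<union> b ` N) (T \<union> a ` N) = fs (T \<union> a ` N) (S \<union> b ` N)"
        using sym dQ0 by blast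
      ultimately show ?thesis by simp
    qed
    have s1: "(S \<union> a ` N) \<inter> (T \<union> a ` N) = a ` N" using sa[of N] assms(6) by auto
    have s2: "T \<union> (S \<union> b ` N) = W" unfolding W_def by auto
    have s3: "T \<inter> (S \<union> b ` N) = {}" using sb[of N] assms(6) by auto
    have sb1: "fs (a ` N) W + fs ((S \<union> a ` N) \<union> (T \<union> a ` N)) {} \<le> k + k"
      using sub[OF dP dQ] vP vQ s1 s2 s3 by simp
    have "disj_pair V ((S \<union> a ` N) \<union> (T \<union> a ` N)) {}"
      using dP dQ unfolding disj_pair_def by auto
    then have "0 \<le> fs ((S \<union> a ` N) \<union> (T \<union> a ` N)) {}" using mono[of _ _ "{}" "{}"] e0 by force
    moreover have "int l \<le> fs (a ` N) W" using cnt[of l] unfolding N_def by simp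
    ultimately show ?thesis using sb1 k_def by linarith
  qed
qed

end
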